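(* Let $\Gamma$ be a splice diagram satisfying the edge determinant condition. Then for all nodes $u,v,w$ of $\Gamma$ we have $\ell_{u,v}\,\ell_{u,w}\leq d_u\,\ell_{v,w}$, with equality if and only if $u$ lies on the geodesic $[v,w]$.
   Context: A splice diagram is a finite tree $\Gamma$ with at least one vertex of valency $\geq3$ and no vertex of valency $2$; vertices of valency $1$ are leaves, the others nodes. For each node $v$ and edge $e$ adjacent to $v$ a positive integer weight $d_{v,e}$ is given; $d_{v,u}:=d_{v,e}$ for $e$ the edge at $v$ on the geodesic $[v,u]$. The total weight of a node is $d_v=\prod_{e\ni v}d_{v,e}$. For distinct vertices $u,v$, $\ell_{u,v}$ is the product of all weights $d_{w,e}$ with $w$ a node on $[u,v]$ and $e$ an edge at $w$ not contained in $[u,v]$; $\ell_{v,v}:=d_v$. Edge determinant condition: $d_{u,v}d_{v,u}>\ell_{u,v}$ for each edge $[u,v]$ between two nodes. *)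

theory Defs
  imports Main
begin

text \<open>A finite graph is given by a vertex set V and an adjacency relation E.
  Edges at a vertex v are identified with the neighbours of v.\<close>

definition nbrs :: "'a set \<Rightarrow> ('a \<Rightarrow> 'a \<Rightarrow> bool) \<Rightarrow> 'a \<Rightarrow> 'a set" where
  "nbrs V E v = {w \<in> V. E v w}"

definition valency :: "'a set \<Rightarrow> ('a \<Rightarrow> 'a \<Rightarrow> bool) \<Rightarrow> 'a \<Rightarrow> nat" where
  "valency V E v = card (nbrs V E v)"

definition simple_path :: "'a set \<Rightarrow> ('a \<Rightarrow> 'a \<Rightarrow> bool) \<Rightarrow> 'a list \<Rightarrow> 'a \<Rightarrow> 'a \<Rightarrow> bool" where
  "simple_path V E p u v \<longleftrightarrow> p \<noteq> [] \<and> hd p = u \<and> last p = v \<and> distinct p \<and>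
     set p \<subseteq> V \<and> (\<forall>i. Suc i < length p \<longrightarrow> E (p ! i) (p ! Suc i))"

definition is_tree :: "'a set \<Rightarrow> ('a \<Rightarrow> 'a \<Rightarrow> bool) \<Rightarrow> bool" where
  "is_tree V E \<longleftrightarrow> finite V \<and> V \<noteq> {} \<and>
     (\<forall>x y. E x y \<longrightarrow> x \<in> V \<and> y \<in> V) \<and> (\<forall>x y. E x y \<longrightarrow> E y x) \<and> (\<forall>x. \<not> E x x) \<and>
     (\<forall>u\<in>V. \<forall>v\<in>V. \<exists>!p. simple_path V E p u v)"

definition geod :: "'a set \<Rightarrow> ('a \<Rightarrow> 'a \<Rightarrow> bool) \<Rightarrow> 'a \<Rightarrow> 'a \<Rightarrow> 'a list" where
  "geod V E u v = (THE p. simple_path V E p u v)"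

definition is_node :: "'a set \<Rightarrow> ('a \<Rightarrow> 'a \<Rightarrow> bool) \<Rightarrow> 'a \<Rightarrow> bool" where
  "is_node V E v \<longleftrightarrow> v \<in> V \<and> valency V E v \<noteq> 1"

definition is_leaf :: "'a set \<Rightarrow> ('a \<Rightarrow> 'a \<Rightarrow> bool) \<Rightarrow> 'a \<Rightarrow> bool" where
  "is_leaf V E v \<longleftrightarrow> v \<in> V \<and> valency V E v = 1"

text \<open>Splice diagram: weights d v w (weight at node v of the edge towards neighbour w)
  are positive integers.\<close>
definition splice_diagram :: "'a set \<Rightarrow> ('a \<Rightarrow> 'a \<Rightarrow> bool) \<Rightarrow> ('a \<Rightarrow> 'a \<Rightarrow> nat) \<Rightarrow> bool" where
  "splice_diagram V E d \<longleftrightarrow> is_tree V E \<and> (\<exists>v\<in>V. valency V E v \<ge> 3) \<and>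
     (\<forall>v\<in>V. valency V E v \<noteq> 2) \<and>
     (\<forall>v w. is_node V E v \<longrightarrow> w \<in> nbrs V E v \<longrightarrow> d v w > 0)"

text \<open>d_{v,u}: weight at v of the edge at v on the geodesic [v,u] (u \<noteq> v).\<close>
definition dw :: "'a set \<Rightarrow> ('a \<Rightarrow> 'a \<Rightarrow> bool) \<Rightarrow> ('a \<Rightarrow> 'a \<Rightarrow> nat) \<Rightarrow> 'a \<Rightarrow> 'a \<Rightarrow> nat" where
  "dw V E d v u = d v (geod V E v u ! 1)"

definition total_weight :: "'a set \<Rightarrow> ('a \<Rightarrow> 'a \<Rightarrow> bool) \<Rightarrow> ('a \<Rightarrow> 'a \<Rightarrow> nat) \<Rightarrow> 'a \<Rightarrow> nat" where
  "total_weight V E d v = (\<Prod>w\<in>nbrs V E v. d v w)"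

text \<open>l_{u,v}: product of the weights d w x, w a node on [u,v], x a neighbour of w
  such that the edge [w,x] is not contained in [u,v]; l_{v,v} = d_v.\<close>
definition ell :: "'a set \<Rightarrow> ('a \<Rightarrow> 'a \<Rightarrow> bool) \<Rightarrow> ('a \<Rightarrow> 'a \<Rightarrow> nat) \<Rightarrow> 'a \<Rightarrow> 'a \<Rightarrow> nat" where
  "ell V E d u v = (if u = v then total_weight V E d v else
     (\<Prod>(w, x)\<in>(SIGMA w:{w \<in> set (geod V E u v). is_node V E w}.
          {x \<in> nbrs V E w. \<not> (\<exists>i. Suc i < length (geod V E u v) \<and>
             {geod V E u v ! i, geod V E u v ! Suc i} = {w, x})}). d w x))"

definition edge_determinant_condition :: "'a set \<Rightarrow> ('a \<Rightarrow> 'a \<Rightarrow> bool) \<Rightarrow> ('a \<Rightarrow> 'a \<Rightarrow> nat) \<Rightarrow> bool" where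
  "edge_determinant_condition V E d \<longleftrightarrow>
     (\<forall>u v. is_node V E u \<longrightarrow> is_node V E v \<longrightarrow> E u v \<longrightarrow>
        dw V E d u v * dw V E d v u > ell V E d u v)"

end

theory Submission
  imports Defs Complex_Main
begin

lemma sp_alt: "simple_path V E p u v \<longleftrightarrow> p \<noteq> [] \<and> hd p = u \<and> last p = v \<and> distinct p \<and>
     set p \<subseteq> V \<and> successively E p"
  unfolding simple_path_def successively_conv_nth by simp

fun Wl :: "('a \<Rightarrow> 'a \<Rightarrow> nat) \<Rightarrow> 'a list \<Rightarrow> real" where
  "Wl d (x # y # r) = real (d x y) * real (d y x) * Wl d (y # r)"
| "Wl d _ = 1"

definition Pl :: "('a \<Rightarrow> real) \<Rightarrow> 'a list \<Rightarrow> real" where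
  "Pl t p = prod_list (map t p)"

definition Lr :: "('a \<Rightarrow> real) \<Rightarrow> ('a \<Rightarrow> 'a \<Rightarrow> nat) \<Rightarrow> 'a list \<Rightarrow> real" where
  "Lr t d p = Pl t p / Wl d p"

lemma Wl_app: "a \<noteq> [] \<Longrightarrow> b \<noteq> [] \<Longrightarrow> last a = hd b \<Longrightarrow> Wl d (a @ tl b) = Wl d a * Wl d b"
proof (induction d a rule: Wl.induct)
  case (1 d x y r)
  then show ?case by simp
next
  case ("2_1" d)
  then show ?case by (cases b) auto
next
  case ("2_2" d x)
  then show ?case by (cases b) auto
qed

lemma Wl_rev: "Wl d (rev p) = Wl d p"
proof (induction d p rule: Wl.induct)
  case (1 d x y r)
  have "Wl d (rev (x # y # r)) = Wl d (rev (y # r) @ tl [y, x])" by simp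
  also have "\<dots> = Wl d (rev (y # r)) * Wl d [y, x]"
    by (rule Wl_app) auto
  finally show ?case using 1 by simp
qed auto

lemma Pl_app: "b \<noteq> [] \<Longrightarrow> Pl t (a @ tl b) * t (hd b) = Pl t a * Pl t b"
  by (cases b) (auto simp: Pl_def)

lemma Pl_rev: "Pl t (rev p) = Pl t p"
  by (simp add: Pl_def rev_map[symmetric] del: rev_map)

lemma Lr_rev: "Lr t d (rev p) = Lr t d p"
  by (simp add: Lr_def Pl_rev Wl_rev)

lemma Lr_app: "a \<noteq> [] \<Longrightarrow> b \<noteq> [] \<Longrightarrow> last a = hd b \<Longrightarrow> Wl d a \<noteq> 0 \<Longrightarrow> Wl d b \<noteq> 0 \<Longrightarrow>
   Lr t d (a @ tl b) * t (hd b) = Lr t d a * Lr t d b"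
  using Pl_app[of b t a] Wl_app[of a b d]
  by (simp add: Lr_def field_simps)

lemma split_list_at: "i < length p \<Longrightarrow> take (Suc i) p @ tl (drop i p) = p"
  by (metis Cons_nth_drop_Suc append_take_drop_id list.sel(3) take_Suc_conv_app_nth append_assoc append_Cons append_Nil)

lemma Wl_pos: "successively (\<lambda>x y. d x y > 0 \<and> d y x > 0) p \<Longrightarrow> Wl d p > 0"
  by (induction d p rule: Wl.induct) auto

lemma Pl_pos: "\<forall>x\<in>set p. t x > 0 \<Longrightarrow> Pl t p > 0"
  unfolding Pl_def by (induction p) auto

lemma Lr_pos: "successively (\<lambda>x y. d x y > 0 \<and> d y x > 0) p \<Longrightarrow> \<forall>x\<in>set p. t x > 0 \<Longrightarrow> Lr t d p > 0"
  unfolding Lr_def using Wl_pos[of d p] Pl_pos[of p t] by simp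

lemma Lr_sq:
  assumes "length p \<ge> 2" "successively (\<lambda>x y. d x y > 0 \<and> d y x > 0) p" "\<forall>x\<in>set p. t x > 0"
    "successively (\<lambda>x y. (Lr t d [x,y])^2 < t x * t y) p"
  shows "(Lr t d p)^2 < t (hd p) * t (last p)"
  using assms
proof (induction p rule: induct_list012)
  case (3 x y r)
  show ?case
  proof (cases r)
    case Nil
    then show ?thesis using 3 by simp
  next
    case (Cons z r')
    have IH0: "(Lr t d (y # r))^2 < t (hd (y # r)) * t (last (y # r))"
      by (rule "3.IH"(2)) (use 3 Cons in auto)
    hence IH: "(Lr t d (y # r))^2 < t y * t (last (y # r))" by simp
    have e: "Lr t d ([x,y] @ tl (y # r)) * t (hd (y # r)) = Lr t d [x,y] * Lr t d (y # r)"
      by (rule Lr_app) (use 3 Wl_pos[of d "[x,y]"] Wl_pos[of d "y#r"] in auto)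
    have ty: "t y > 0" using 3 by auto
    have h1: "(Lr t d [x,y])^2 < t x * t y" using 3 by simp
    have p1: "(Lr t d [x,y])^2 \<ge> 0" "(Lr t d (y#r))^2 \<ge> 0" by auto
    have "(Lr t d (x # y # r))^2 * (t y)^2 = (Lr t d [x,y])^2 * (Lr t d (y # r))^2"
      using e by (simp add: power_mult_distrib[symmetric])
    also have "\<dots> < (t x * t y) * (t y * t (last (y # r)))"
      using h1 IH p1 by (intro mult_strict_mono') auto
    also have "\<dots> = (t x * t (last (x # y # r))) * (t y)^2"
      by (simp add: power2_eq_square)
    finally show ?thesis using ty
      by (metis hd_Cons_tl list.discI list.sel(1) mult_less_cancel_right_pos zero_less_power)
  qed
qed auto


lemma geod_sp: "is_tree V E \<Longrightarrow> x \<in> V \<Longrightarrow> y \<in> V \<Longrightarrow> simple_path V E (geod V E x y) x y"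
proof -
  assume T: "is_tree V E" and xy: "x \<in> V" "y \<in> V"
  from T have "\<forall>u\<in>V. \<forall>v\<in>V. \<exists>!p. simple_path V E p u v" unfolding is_tree_def by (elim conjE)
  with xy have "\<exists>!p. simple_path V E p x y" by blast
  then show ?thesis unfolding geod_def by (rule theI')
qed

lemma geod_eq: "is_tree V E \<Longrightarrow> simple_path V E p x y \<Longrightarrow> geod V E x y = p"
proof -
  assume T: "is_tree V E" and s: "simple_path V E p x y"
  from s have "p \<noteq> []" "hd p = x" "last p = y" "set p \<subseteq> V" unfolding simple_path_def by auto
  then have xy: "x \<in> V" "y \<in> V" by auto
  from T have "\<forall>u\<in>V. \<forall>v\<in>V. \<exists>!p. simple_path V E p u v" unfolding is_tree_def by (elim conjE)
  with xy have "\<exists>!p. simple_path V E p x y" by blast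
  then show ?thesis unfolding geod_def using s by (rule the1_equality)
qed

lemma sp_take: "simple_path V E p x y \<Longrightarrow> i < length p \<Longrightarrow> simple_path V E (take (Suc i) p) x (p ! i)"
proof -
  assume s: "simple_path V E p x y" and i: "i < length p"
  have "successively E p" using s unfolding sp_alt by blast
  then have "successively E (take (Suc i) p)"
    unfolding successively_conv_nth by simp
  moreover have "last (take (Suc i) p) = p ! i" using i
    by (simp add: take_Suc_conv_app_nth)
  moreover have "set (take (Suc i) p) \<subseteq> set p" by (rule set_take_subset)
  ultimately show ?thesis using s i unfolding sp_alt by (auto simp: hd_take)
qed

lemma sp_drop: "simple_path V E p x y \<Longrightarrow> i < length p \<Longrightarrow> simple_path V E (drop i p) (p ! i) y"
  unfolding sp_alt
  by (auto simp: successively_conv_nth hd_drop_conv_nth dest: in_set_dropD)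

lemma sp_rev: "(\<forall>a b. E a b \<longrightarrow> E b a) \<Longrightarrow> simple_path V E p x y \<Longrightarrow> simple_path V E (rev p) y x"
  unfolding sp_alt
  by (auto simp: hd_rev last_rev elim!: successively_mono)

lemma geod_refl: "is_tree V E \<Longrightarrow> x \<in> V \<Longrightarrow> geod V E x x = [x]"
  by (rule geod_eq) (auto simp: simple_path_def)

lemma geod_adj: "is_tree V E \<Longrightarrow> E x y \<Longrightarrow> geod V E x y = [x, y]"
  by (rule geod_eq) (auto simp: is_tree_def sp_alt)


lemma nodes_on_path:
  assumes T: "is_tree V E" and s: "simple_path V E p x y" and nx: "is_node V E x" and ny: "is_node V E y"
    and z: "z \<in> set p"
  shows "is_node V E z"
proof -
  from z obtain i where i: "i < length p" "p ! i = z" by (auto simp: in_set_conv_nth)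
  have sym: "\<forall>a b. E a b \<longrightarrow> E b a" and fin: "finite V" using T unfolding is_tree_def by auto
  have sV: "set p \<subseteq> V" and dist: "distinct p" and hd: "hd p = x" and la: "last p = y" and ne: "p \<noteq> []"
    and adj: "\<And>j. Suc j < length p \<Longrightarrow> E (p ! j) (p ! Suc j)"
    using s unfolding simple_path_def by auto
  show ?thesis
  proof (cases "i = 0")
    case True then show ?thesis using i hd ne nx by (simp add: hd_conv_nth)
  next
    case False
    show ?thesis
    proof (cases "Suc i = length p")
      case True
      then have "i = length p - 1" by simp
      then show ?thesis using i la ne ny by (simp add: last_conv_nth)
    next
      case False2: False
      obtain j where j: "i = Suc j" using False by (cases i) auto
      have l: "Suc i < length p" using i False2 by simp
      have e1: "E z (p ! j)" using adj[of j] j i sym l by auto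
      have e2: "E z (p ! Suc i)" using adj[of i] i l by auto
      have nq: "p ! j \<noteq> p ! Suc i" using dist l j by (simp add: nth_eq_iff_index_eq)
      have inV: "p ! j \<in> V" "p ! Suc i \<in> V" "z \<in> V" using sV l j i by (auto simp: subset_iff)
      have sub: "{p ! j, p ! Suc i} \<subseteq> nbrs V E z" using e1 e2 inV by (auto simp: nbrs_def)
      have "finite (nbrs V E z)" using fin by (simp add: nbrs_def)
      then have "card {p ! j, p ! Suc i} \<le> card (nbrs V E z)" using sub by (rule card_mono)
      then have "valency V E z \<ge> 2" using nq by (simp add: valency_def)
      then show ?thesis using inV by (simp add: is_node_def)
    qed
  qed
qed

lemma ex_Suc_less: "(\<exists>i. Suc i < Suc n \<and> Q i) \<longleftrightarrow> (0 < n \<and> Q 0) \<or> (\<exists>i. Suc i < n \<and> Q (Suc i))"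
  by (metis Suc_less_SucD Suc_less_eq not0_implies_Suc zero_less_Suc)

definition PE :: "'a list \<Rightarrow> ('a \<times> 'a) set" where
  "PE p = {(a, b). \<exists>i. Suc i < length p \<and> {p ! i, p ! Suc i} = {a, b}}"

lemma PE_sub: "PE p \<subseteq> set p \<times> set p"
  unfolding PE_def by (auto simp: doubleton_eq_iff)

lemma PE_Cons2: "PE (x # y # r) = insert (x, y) (insert (y, x) (PE (y # r)))"
proof -
  have "(a, b) \<in> PE (x # y # r) \<longleftrightarrow> (a, b) \<in> insert (x, y) (insert (y, x) (PE (y # r)))" for a b
    unfolding PE_def
    apply (simp only: mem_Collect_eq case_prod_conv length_Cons ex_Suc_less)
    apply (auto simp: doubleton_eq_iff)
    done
  then show ?thesis by auto
qed

lemma PE_Wl: "distinct p \<Longrightarrow> (\<Prod>(a, b)\<in>PE p. real (d a b)) = Wl d p"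
proof (induction d p rule: Wl.induct)
  case (1 d x y r)
  have nin: "(x, y) \<notin> PE (y # r)" "(y, x) \<notin> PE (y # r)" "(x, y) \<noteq> (y, x)"
    using PE_sub[of "y # r"] 1(2) by auto
  have fin: "finite (PE (y # r))" using PE_sub[of "y # r"] finite_subset by blast
  show ?case using 1 nin fin by (simp add: PE_Cons2)
next
  case ("2_1" d) then show ?case by (simp add: PE_def)
next
  case ("2_2" d x) then show ?case by (simp add: PE_def)
qed


lemma tw_pos:
  assumes "splice_diagram V E d" "is_node V E z"
  shows "total_weight V E d z > 0"
  unfolding total_weight_def
  using assms unfolding splice_diagram_def by (intro prod_pos) auto

lemma path_pos:
  assumes S: "splice_diagram V E d" and s: "simple_path V E p x y"
    and nx: "is_node V E x" and ny: "is_node V E y"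
  shows "successively (\<lambda>a b. d a b > 0 \<and> d b a > 0) p"
    and "\<forall>z\<in>set p. real (total_weight V E d z) > 0"
    and "\<forall>z\<in>set p. is_node V E z"
proof -
  have T: "is_tree V E" using S by (simp add: splice_diagram_def)
  have nodes: "\<forall>z\<in>set p. is_node V E z" using nodes_on_path[OF T s nx ny] by blast
  then show "\<forall>z\<in>set p. is_node V E z" .
  show "\<forall>z\<in>set p. real (total_weight V E d z) > 0" using nodes tw_pos[OF S] by auto
  have sym: "\<forall>a b. E a b \<longrightarrow> E b a" using T unfolding is_tree_def by auto
  have dp: "\<forall>v w. is_node V E v \<longrightarrow> w \<in> nbrs V E v \<longrightarrow> d v w > 0" using S unfolding splice_diagram_def by auto
  have sE: "successively E p" and sV: "set p \<subseteq> V" using s unfolding sp_alt by auto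
  show "successively (\<lambda>a b. d a b > 0 \<and> d b a > 0) p"
  proof (rule successively_mono[OF sE])
    fix a b assume "a \<in> set p" "b \<in> set p" "E a b"
    then show "d a b > 0 \<and> d b a > 0" using nodes dp sym sV by (auto simp: nbrs_def subset_iff)
  qed
qed

lemma ell_Lr:
  assumes S: "splice_diagram V E d" and nx: "is_node V E x" and ny: "is_node V E y"
  shows "real (ell V E d x y) = Lr (\<lambda>z. real (total_weight V E d z)) d (geod V E x y)"
proof -
  let ?t = "\<lambda>z. real (total_weight V E d z)"
  have T: "is_tree V E" using S by (simp add: splice_diagram_def)
  have fin: "finite V" and sym: "\<forall>a b. E a b \<longrightarrow> E b a" using T unfolding is_tree_def by auto
  have xV: "x \<in> V" "y \<in> V" using nx ny by (auto simp: is_node_def)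
  show ?thesis
  proof (cases "x = y")
    case True
    then show ?thesis using geod_refl[OF T xV(1)] by (simp add: ell_def Lr_def Pl_def)
  next
    case False
    define p where "p = geod V E x y"
    have s: "simple_path V E p x y" unfolding p_def by (rule geod_sp[OF T xV])
    note pp = path_pos[OF S s nx ny]
    have dist: "distinct p" and sV: "set p \<subseteq> V" and adj: "successively E p"
      using s unfolding sp_alt by auto
    define S where "S = (SIGMA w:set p. nbrs V E w)"
    let ?f = "\<lambda>(w, z). real (d w z)"
    have finS: "finite S" unfolding S_def using fin by (auto simp: nbrs_def)
    have PEsub: "PE p \<subseteq> S"
    proof
      fix q assume "q \<in> PE p"
      then obtain a b i where q: "q = (a, b)" "Suc i < length p" "{p ! i, p ! Suc i} = {a, b}"
        unfolding PE_def by auto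
      have e: "E (p ! i) (p ! Suc i)" using adj q(2) by (simp add: successively_nth)
      have inV: "p ! i \<in> set p" "p ! Suc i \<in> set p" using q(2) by auto
      show "q \<in> S" using q e inV sym sV unfolding S_def
        by (auto simp: doubleton_eq_iff nbrs_def subset_iff)
    qed
    have ellS: "ell V E d x y = (\<Prod>(w, z)\<in>S - PE p. d w z)"
    proof -
      have "{w \<in> set p. is_node V E w} = set p" using pp(3) by auto
      then show ?thesis unfolding ell_def S_def PE_def p_def[symmetric] using False
        by (auto intro!: prod.cong)
    qed
    have "Pl ?t p = (\<Prod>w\<in>set p. ?t w)" unfolding Pl_def using dist
      by (simp add: prod.distinct_set_conv_list)
    also have "\<dots> = (\<Prod>w\<in>set p. \<Prod>z\<in>nbrs V E w. real (d w z))"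
      by (simp add: total_weight_def)
    also have "\<dots> = prod ?f S" unfolding S_def
      by (rule prod.Sigma) (use fin in \<open>auto simp: nbrs_def\<close>)
    also have "\<dots> = prod ?f (S - PE p) * prod ?f (PE p)"
      by (rule prod.subset_diff[OF PEsub finS])
    also have "prod ?f (S - PE p) = real (ell V E d x y)"
      unfolding ellS by (simp add: of_nat_prod case_prod_unfold)
    also have "prod ?f (PE p) = Wl d p" using PE_Wl[OF dist] by simp
    finally have "Pl ?t p = real (ell V E d x y) * Wl d p" .
    moreover have "Wl d p > 0" by (rule Wl_pos[OF pp(1)])
    ultimately show ?thesis unfolding p_def[symmetric] Lr_def by (simp add: field_simps)
  qed
qed


lemma sp_join:
  assumes sym: "\<forall>a b. E a b \<longrightarrow> E b a" and b: "simple_path V E b c v" and b': "simple_path V E b' c w"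
    and disj: "set b \<inter> set b' \<subseteq> {c}"
  shows "simple_path V E (rev b @ tl b') v w"
proof -
  obtain s where bs: "b = c # s" using b unfolding simple_path_def by (cases b) auto
  obtain t where bt: "b' = c # t" using b' unfolding simple_path_def by (cases b') auto
  have sb: "successively E (c # s)" "distinct (c # s)" "last (c # s) = v" "set (c # s) \<subseteq> V"
    using b bs unfolding sp_alt by auto
  have sb': "successively E (c # t)" "distinct (c # t)" "last (c # t) = w" "set (c # t) \<subseteq> V"
    using b' bt unfolding sp_alt by auto
  have st: "set s \<inter> set t = {}" using disj bs bt sb(2) by auto
  have eq: "rev b @ tl b' = rev s @ (c # t)" using bs bt by simp
  have succ: "successively E (rev s @ (c # t))"
  proof -
    have "successively E (rev s)" using sb(1) sym
      by (auto simp: successively_Cons elim!: successively_mono)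
    moreover have "s = [] \<or> E (last (rev s)) c" using sb(1) sym
      by (cases s) (auto simp: last_rev)
    ultimately show ?thesis using sb'(1) by (auto simp: successively_append_iff)
  qed
  have hd: "hd (rev s @ c # t) = v"
    using sb(3) by (cases "s = []") (auto simp: hd_rev)
  show ?thesis unfolding eq sp_alt
    using succ hd sb sb' st by auto
qed

lemma edge_det_Lr:
  assumes S: "splice_diagram V E d" and ED: "edge_determinant_condition V E d"
    and na: "is_node V E a" and nb: "is_node V E b" and e: "E a b"
  shows "(Lr (\<lambda>z. real (total_weight V E d z)) d [a, b])^2
     < real (total_weight V E d a) * real (total_weight V E d b)"
proof -
  let ?t = "\<lambda>z. real (total_weight V E d z)"
  have T: "is_tree V E" using S by (simp add: splice_diagram_def)
  have sym: "\<forall>a b. E a b \<longrightarrow> E b a" using T unfolding is_tree_def by auto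
  have g1: "geod V E a b = [a, b]" by (rule geod_adj[OF T e])
  have g2: "geod V E b a = [b, a]" by (rule geod_adj[OF T]) (use sym e in auto)
  have "ell V E d a b < dw V E d a b * dw V E d b a"
    using ED na nb e unfolding edge_determinant_condition_def by blast
  then have lt: "ell V E d a b < d a b * d b a" by (simp add: dw_def g1 g2)
  have s: "simple_path V E [a, b] a b" using g1 geod_sp[OF T] na nb by (metis is_node_def)
  note pp = path_pos[OF S s na nb]
  have Lpos: "Lr ?t d [a, b] > 0" by (rule Lr_pos[OF pp(1) pp(2)])
  have L: "Lr ?t d [a, b] = real (ell V E d a b)" using ell_Lr[OF S na nb] g1 by simp
  have W: "Wl d [a, b] = real (d a b * d b a)" by simp
  have Wp: "Wl d [a, b] > 0" by (rule Wl_pos[OF pp(1)])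
  have LW: "Lr ?t d [a, b] * Wl d [a, b] = ?t a * ?t b"
    unfolding Lr_def using Wp by (simp del: Wl.simps add: Pl_def)
  have "Lr ?t d [a, b] < Wl d [a, b]" using lt L W by (metis of_nat_less_iff)
  then have "Lr ?t d [a, b] * Lr ?t d [a, b] < Lr ?t d [a, b] * Wl d [a, b]"
    using Lpos by simp
  then show ?thesis using LW by (simp add: power2_eq_square)
qed

lemma path_sq:
  assumes S: "splice_diagram V E d" and ED: "edge_determinant_condition V E d"
    and s: "simple_path V E p x y" and nx: "is_node V E x" and ny: "is_node V E y" and xy: "x \<noteq> y"
  shows "(Lr (\<lambda>z. real (total_weight V E d z)) d p)^2
     < real (total_weight V E d x) * real (total_weight V E d y)"
proof -
  note pp = path_pos[OF S s nx ny]
  have l: "length p \<ge> 2" using s xy unfolding simple_path_def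
    by (cases p; cases "tl p") auto
  have sE: "successively E p" and h: "hd p = x" "last p = y" using s unfolding sp_alt by auto
  have "successively (\<lambda>a b. (Lr (\<lambda>z. real (total_weight V E d z)) d [a, b])^2
     < real (total_weight V E d a) * real (total_weight V E d b)) p"
    by (rule successively_mono[OF sE]) (use pp(3) edge_det_Lr[OF S ED] in auto)
  from Lr_sq[OF l pp(1) pp(2) this] show ?thesis using h by simp
qed


theorem proposition2p10:
  fixes V :: "'a set" and E :: "'a \<Rightarrow> 'a \<Rightarrow> bool" and d :: "'a \<Rightarrow> 'a \<Rightarrow> nat"
  assumes "splice_diagram V E d"
    and "edge_determinant_condition V E d"
    and "is_node V E u" and "is_node V E v" and "is_node V E w"
  shows "ell V E d u v * ell V E d u w \<le> total_weight V E d u * ell V E d v w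
    \<and> (ell V E d u v * ell V E d u w = total_weight V E d u * ell V E d v w
           \<longleftrightarrow> u \<in> set (geod V E v w))"
proof -
  note S = assms(1) and ED = assms(2) and nu = assms(3) and nv = assms(4) and nw = assms(5)
  let ?t = "\<lambda>z. real (total_weight V E d z)"
  let ?L = "Lr ?t d"
  have T: "is_tree V E" using S by (simp add: splice_diagram_def)
  have sym: "\<forall>a b. E a b \<longrightarrow> E b a" using T unfolding is_tree_def by auto
  have uV: "u \<in> V" "v \<in> V" "w \<in> V" using nu nv nw by (auto simp: is_node_def)
  have Wnz: "Wl d p \<noteq> 0" if "simple_path V E p x y" "is_node V E x" "is_node V E y" for p x y
    using Wl_pos[OF path_pos(1)[OF S that]] by simp
  have Lpos: "?L p > 0" if "simple_path V E p x y" "is_node V E x" "is_node V E y" for p x y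
    using Lr_pos[OF path_pos(1)[OF S that] path_pos(2)[OF S that]] .
  have nodeon: "is_node V E z" if "simple_path V E p x y" "is_node V E x" "is_node V E y" "z \<in> set p" for p x y z
    using path_pos(3)[OF S that(1-3)] that(4) by blast
  have splitL: "?L p * ?t (p ! i) = ?L (take (Suc i) p) * ?L (drop i p)"
    if sp: "simple_path V E p x y" "is_node V E x" "is_node V E y" and i: "i < length p" for p x y i
  proof -
    have s1: "simple_path V E (take (Suc i) p) x (p ! i)" by (rule sp_take[OF sp(1) i])
    have s2: "simple_path V E (drop i p) (p ! i) y" by (rule sp_drop[OF sp(1) i])
    have ni: "is_node V E (p ! i)" using nodeon[OF sp] i by simp
    have "?L (take (Suc i) p @ tl (drop i p)) * ?t (hd (drop i p)) = ?L (take (Suc i) p) * ?L (drop i p)"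
      by (rule Lr_app) (use i Wnz[OF s1 sp(2) ni] Wnz[OF s2 ni sp(3)] in
          \<open>auto simp: hd_drop_conv_nth take_Suc_conv_app_nth\<close>)
    then show ?thesis using split_list_at[OF i] i by (simp add: hd_drop_conv_nth)
  qed
  have ellL: "real (ell V E d x y) = ?L (geod V E x y)" if "is_node V E x" "is_node V E y" for x y
    by (rule ell_Lr[OF S that])
  have key: "(u \<in> set (geod V E v w) \<longrightarrow> ell V E d u v * ell V E d u w = total_weight V E d u * ell V E d v w)
     \<and> (u \<notin> set (geod V E v w) \<longrightarrow> ell V E d u v * ell V E d u w < total_weight V E d u * ell V E d v w)"
  proof (intro conjI impI)
    assume uin: "u \<in> set (geod V E v w)"
    define r where "r = geod V E v w"
    have sr: "simple_path V E r v w" unfolding r_def by (rule geod_sp[OF T uV(2,3)])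
    obtain i where i: "i < length r" "r ! i = u" using uin unfolding r_def[symmetric] by (auto simp: in_set_conv_nth)
    have e1: "?L r * ?t u = ?L (take (Suc i) r) * ?L (drop i r)" using splitL[OF sr nv nw i(1)] i by simp
    have s1: "simple_path V E (take (Suc i) r) v u" using sp_take[OF sr i(1)] i by simp
    have s2: "simple_path V E (drop i r) u w" using sp_drop[OF sr i(1)] i by simp
    have g1: "geod V E u v = rev (take (Suc i) r)" by (rule geod_eq[OF T sp_rev[OF sym s1]])
    have g2: "geod V E u w = drop i r" by (rule geod_eq[OF T s2])
    have "real (ell V E d v w) * ?t u = real (ell V E d u v) * real (ell V E d u w)"
      using e1 ellL[OF nv nw] ellL[OF nu nv] ellL[OF nu nw] g1 g2 r_def by (simp add: Lr_rev)
    then have "real (ell V E d u v * ell V E d u w) = real (total_weight V E d u * ell V E d v w)"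
      by (simp add: mult.commute)
    then show "ell V E d u v * ell V E d u w = total_weight V E d u * ell V E d v w"
      using of_nat_eq_iff by blast
  next
    assume unin: "u \<notin> set (geod V E v w)"
    define p where "p = geod V E u v"
    define q where "q = geod V E u w"
    have sp: "simple_path V E p u v" unfolding p_def by (rule geod_sp[OF T uV(1,2)])
    have sq: "simple_path V E q u w" unfolding q_def by (rule geod_sp[OF T uV(1,3)])
    define J where "J = {j. j < length p \<and> p ! j \<in> set q}"
    have finJ: "finite J" unfolding J_def by simp
    have p0: "p ! 0 = u" "p \<noteq> []" using sp unfolding simple_path_def by (auto simp: hd_conv_nth)
    have q0: "q ! 0 = u" "q \<noteq> []" using sq unfolding simple_path_def by (auto simp: hd_conv_nth)
    have "0 \<in> J" unfolding J_def using p0 q0 by (metis length_greater_0_conv nth_mem mem_Collect_eq)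
    then have J_ne: "J \<noteq> {}" by auto
    define j where "j = Max J"
    have jJ: "j \<in> J" unfolding j_def using finJ J_ne by (rule Max_in)
    have jmax: "\<And>m. m \<in> J \<Longrightarrow> m \<le> j" unfolding j_def using finJ by simp
    have jl: "j < length p" and cq: "p ! j \<in> set q" using jJ unfolding J_def by auto
    define c where "c = p ! j"
    obtain k where k: "k < length q" "q ! k = c" using cq unfolding c_def by (auto simp: in_set_conv_nth)
    have nc: "is_node V E c" unfolding c_def using nodeon[OF sp nu nv] jl by simp
    define a where "a = take (Suc j) p"
    define b where "b = drop j p"
    define b' where "b' = drop k q"
    have sa: "simple_path V E a u c" unfolding a_def c_def by (rule sp_take[OF sp jl])
    have sb: "simple_path V E b c v" unfolding b_def c_def by (rule sp_drop[OF sp jl])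
    have sa': "simple_path V E (take (Suc k) q) u c" using sp_take[OF sq k(1)] k by simp
    have sb': "simple_path V E b' c w" unfolding b'_def using sp_drop[OF sq k(1)] k by simp
    have aa: "take (Suc k) q = a" using geod_eq[OF T sa] geod_eq[OF T sa'] by simp
    have disj: "set b \<inter> set b' \<subseteq> {c}"
    proof
      fix z assume z: "z \<in> set b \<inter> set b'"
      then obtain n where n: "n < length b" "b ! n = z" by (auto simp: in_set_conv_nth)
      have zp: "z = p ! (j + n)" "j + n < length p" using n jl unfolding b_def by auto
      have "z \<in> set q" using z unfolding b'_def by (auto dest: in_set_dropD)
      then have "j + n \<in> J" using zp unfolding J_def by auto
      then have "n = 0" using jmax by fastforce
      then show "z \<in> {c}" using zp c_def by simp
    qed
    define r where "r = rev b @ tl b'"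
    have sr: "simple_path V E r v w" unfolding r_def by (rule sp_join[OF sym sb sb' disj])
    have gr: "geod V E v w = r" by (rule geod_eq[OF T sr])
    have hb: "hd b = c" "b \<noteq> []" and hb': "hd b' = c" "b' \<noteq> []"
      using sb sb' unfolding simple_path_def by auto
    have "c \<in> set r" unfolding r_def using hb by (metis Un_iff hd_in_set set_append set_rev)
    then have cu: "c \<noteq> u" using unin gr by auto
    have e1: "?L p * ?t c = ?L a * ?L b"
      using splitL[OF sp nu nv jl] unfolding a_def b_def c_def .
    have e2: "?L q * ?t c = ?L a * ?L b'"
      using splitL[OF sq nu nw k(1)] k aa unfolding b'_def by simp
    have e3: "?L r * ?t c = ?L (rev b) * ?L b'"
      unfolding r_def
      using Lr_app[of "rev b" b' d ?t] hb hb' Wnz[OF sb nc nv] Wnz[OF sb' nc nw]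
      by (simp add: Wl_rev last_rev)
    have sq_a: "(?L a)^2 < ?t u * ?t c" by (rule path_sq[OF S ED sa nu nc cu[symmetric]])
    have pb: "?L b > 0" by (rule Lpos[OF sb nc nv])
    have pb': "?L b' > 0" by (rule Lpos[OF sb' nc nw])
    have tc: "?t c > 0" using tw_pos[OF S nc] by simp
    have "(?L p * ?L q) * (?t c * ?t c) = (?L a)^2 * (?L b * ?L b')"
      using e1 e2 by (simp add: power2_eq_square algebra_simps)
    also have "\<dots> < (?t u * ?t c) * (?L b * ?L b')"
      using sq_a pb pb' by simp
    also have "\<dots> = (?t u * ?L r) * (?t c * ?t c)"
      using e3 Lr_rev[of ?t d b] by (simp add: algebra_simps)
    finally have "?L p * ?L q < ?t u * ?L r" using tc by simp
    then have "real (ell V E d u v) * real (ell V E d u w) < real (total_weight V E d u) * real (ell V E d v w)"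
      using ellL[OF nu nv] ellL[OF nu nw] ellL[OF nv nw] p_def q_def gr by simp
    then show "ell V E d u v * ell V E d u w < total_weight V E d u * ell V E d v w"
      by (metis of_nat_less_iff of_nat_mult)
  qed
  then show ?thesis by (cases "u \<in> set (geod V E v w)") auto
qed

end
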